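(* Let $c\in\mathsf{ACirc}[n,m]$. Then $[\![c]\!]=\{(p,f(p)):p\in k(x)^n\}$ for some rational affine map $f:k(x)^n\to k(x)^m$ if and only if there exists an affine signal flow graph $g$ of sort $(n,m)$ such that $[\![g]\!]=[\![c]\!]$.
   Context: Fix a field $k$; $k(x)$ is the field of polynomial fractions. Circuits: terms built from generators with sorts $(n,m)$: copier $\Delta:(1,2)$, discard $!:(1,0)$, amplifier $\mathsf{s}_r:(1,1)$ ($r\in k$), register $\mathsf{x}:(1,1)$, adder $+:(2,1)$, zero $0:(0,1)$, one $\mathbf{1}:(0,1)$; mirror images $\Delta^{op}:(2,1)$, $!^{op}:(0,1)$, $\mathsf{s}_r^{op}$, $\mathsf{x}^{op}:(1,1)$, $+^{op}:(1,2)$, $0^{op}:(1,0)$, $\mathbf{1}^{op}:(1,0)$; $\mathrm{id}_0:(0,0),\mathrm{id}_1:(1,1),\mathrm{sw}:(2,2)$; closed under $;$ and $\oplus$; $\mathsf{ACirc}[n,m]$: circuits of sort $(n,m)$. Denotation: $[\![\Delta]\!]=\{(p,(p,p))\}$, $[\![!]\!]=\{(p,\bullet)\}$, $[\![+]\!]=\{((p,q),p+q)\}$, $[\![0]\!]=\{(\bullet,0)\}$, $[\![\mathbf 1]\!]=\{(\bullet,1)\}$, $[\![\mathsf s_r]\!]=\{(p,rp)\}$, $[\![\mathsf x]\!]=\{(p,px)\}$; mirrored generators denote converse relations; structural ones identity, swap, $\{(\bullet,\bullet)\}$; $;$ relational composition, $\oplus$ product. Feedback: for $c:(n+1,m+1)$,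 $\mathrm{Tr}(c):(n,m)$ connects the last right port of $c$ to its last left port through a register $\mathsf x$, bending the wire with the cup $!^{op};\Delta:(0,2)$ and the cap $\Delta^{op};!:(2,0)$. Affine signal flow graphs: smallest class containing $\Delta,!,\mathsf s_r,\mathsf x,+,0,\mathbf 1,\mathrm{id}_0,\mathrm{id}_1,\mathrm{sw}$ and closed under $;$, $\oplus$, $\mathrm{Tr}$. $\mathsf{Rat}\subseteq k(x)$: fractions $p/q$ with $q$ having nonzero constant term. An affine map $f(p)=Ap+b$ is rational if $A$ and $b$ have all entries in $\mathsf{Rat}$. *)

theory Defs
  imports "HOL-Computational_Algebra.Polynomial" "HOL-Computational_Algebra.Fraction_Field"
begin

type_synonym 'k kx = "'k poly fract"

definition const_kx :: "'k::field \<Rightarrow> 'k kx" where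
  "const_kx r = Fract [:r:] 1"

definition X_kx :: "'k::field kx" where
  "X_kx = Fract [:0, 1:] 1"

definition RatK :: "'k::field kx set" where
  "RatK = {Fract p q | p q. coeff q 0 \<noteq> 0}"

datatype 'k gen = GCopy | GDisc | GAmp 'k | GReg | GAdd | GZero | GOne

datatype 'k circ =
    Gen "'k gen"
  | GenOp "'k gen"
  | Id0 | Id1 | Sw
  | Seq "'k circ" "'k circ"
  | Tensor "'k circ" "'k circ"

fun gsort :: "'k gen \<Rightarrow> nat \<times> nat" where
  "gsort GCopy = (1, 2)"
| "gsort GDisc = (1, 0)"
| "gsort (GAmp r) = (1, 1)"
| "gsort GReg = (1, 1)"
| "gsort GAdd = (2, 1)"
| "gsort GZero = (0, 1)"
| "gsort GOne = (0, 1)"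

inductive has_sort :: "'k circ \<Rightarrow> nat \<Rightarrow> nat \<Rightarrow> bool" where
  "gsort g = (n, m) \<Longrightarrow> has_sort (Gen g) n m"
| "gsort g = (m, n) \<Longrightarrow> has_sort (GenOp g) n m"
| "has_sort Id0 0 0"
| "has_sort Id1 1 1"
| "has_sort Sw 2 2"
| "has_sort c n l \<Longrightarrow> has_sort d l m \<Longrightarrow> has_sort (Seq c d) n m"
| "has_sort c n1 m1 \<Longrightarrow> has_sort d n2 m2 \<Longrightarrow> has_sort (Tensor c d) (n1 + n2) (m1 + m2)"

fun gden :: "'k::field gen \<Rightarrow> ('k kx list \<times> 'k kx list) set" where
  "gden GCopy = {([p], [p, p]) | p. True}"
| "gden GDisc = {([p], []) | p. True}"
| "gden (GAmp r) = {([p], [const_kx r * p]) | p. True}"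
| "gden GReg = {([p], [p * X_kx]) | p. True}"
| "gden GAdd = {([p, q], [p + q]) | p q. True}"
| "gden GZero = {([], [0])}"
| "gden GOne = {([], [1])}"

fun den :: "'k::field circ \<Rightarrow> ('k kx list \<times> 'k kx list) set" where
  "den (Gen g) = gden g"
| "den (GenOp g) = (gden g)\<inverse>"
| "den Id0 = {([], [])}"
| "den Id1 = {([p], [p]) | p. True}"
| "den Sw = {([p, q], [q, p]) | p q. True}"
| "den (Seq c d) = den c O den d"
| "den (Tensor c d) = {(a1 @ a2, b1 @ b2) | a1 a2 b1 b2. (a1, b1) \<in> den c \<and> (a2, b2) \<in> den d}"

fun idc :: "nat \<Rightarrow> 'k circ" where
  "idc 0 = Id0"
| "idc (Suc n) = Tensor Id1 (idc n)"

definition cup :: "'k circ" where "cup = Seq (GenOp GDisc) (Gen GCopy)"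
definition cap :: "'k circ" where "cap = Seq (GenOp GCopy) (Gen GDisc)"

text \<open>Feedback: for c of sort (n+1, m+1), Tr n m c has sort (n, m); the last right port of c
  is connected through a register to its last left port, using cup and cap.\<close>
definition Tr :: "nat \<Rightarrow> nat \<Rightarrow> 'k circ \<Rightarrow> 'k circ" where
  "Tr n m c =
     Seq (Tensor (idc n) cup)
    (Seq (Tensor c Id1)
    (Seq (Tensor (idc m) (Tensor (Gen GReg) Id1))
         (Tensor (idc m) cap)))"

inductive sfg :: "'k circ \<Rightarrow> bool" where
  "sfg (Gen g)"
| "sfg Id0"
| "sfg Id1"
| "sfg Sw"
| "sfg c \<Longrightarrow> sfg d \<Longrightarrow> has_sort c n l \<Longrightarrow> has_sort d l m \<Longrightarrow> sfg (Seq c d)"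
| "sfg c \<Longrightarrow> sfg d \<Longrightarrow> sfg (Tensor c d)"
| "sfg c \<Longrightarrow> has_sort c (Suc n) (Suc m) \<Longrightarrow> sfg (Tr n m c)"

definition rational_affine :: "nat \<Rightarrow> nat \<Rightarrow> ('k::field kx list \<Rightarrow> 'k kx list) \<Rightarrow> bool" where
  "rational_affine n m f \<longleftrightarrow>
     (\<exists>A b. (\<forall>i<m. \<forall>j<n. A i j \<in> RatK) \<and> (\<forall>i<m. b i \<in> RatK) \<and>
        (\<forall>p. length p = n \<longrightarrow>
             f p = map (\<lambda>i. (\<Sum>j<n. A i j * p ! j) + b i) [0..<m]))"

end

theory Submission
  imports Defs
begin

lemma has_sort_TensorI:
  "has_sort c n1 m1 \<Longrightarrow> has_sort d n2 m2 \<Longrightarrow> n = n1 + n2 \<Longrightarrow> m = m1 + m2 \<Longrightarrow> has_sort (Tensor c d) n m"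
  using has_sort.intros(7) by blast

inductive_cases hs_Gen: "has_sort (Gen g) n m"
inductive_cases hs_GenOp: "has_sort (GenOp g) n m"
inductive_cases hs_Id0: "has_sort Id0 n m"
inductive_cases hs_Id1: "has_sort Id1 n m"
inductive_cases hs_Sw: "has_sort Sw n m"
inductive_cases hs_Seq: "has_sort (Seq c d) n m"
inductive_cases hs_Tensor: "has_sort (Tensor c d) n m"

lemma has_sort_unique:
  "has_sort c n m \<Longrightarrow> has_sort c n' m' \<Longrightarrow> n' = n \<and> m' = m"
proof (induction arbitrary: n' m' rule: has_sort.induct)
  case (6 c n l d m)
  from 6(5) obtain l' where "has_sort c n' l'" "has_sort d l' m'" by (rule hs_Seq)
  then show ?case using 6 by blast
next
  case (7 c n1 m1 d n2 m2)
  from 7(5) obtain a b e h where "n' = a + e" "m' = b + h" "has_sort c a b" "has_sort d e h" by (rule hs_Tensor)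
  then show ?case using 7 by force
qed (auto elim: hs_Gen hs_GenOp hs_Id0 hs_Id1 hs_Sw)

lemma den_lengths:
  "has_sort c n m \<Longrightarrow> (a, b) \<in> den c \<Longrightarrow> length a = n \<and> length b = m"
proof (induction arbitrary: a b rule: has_sort.induct)
  case (1 g n m)
  then show ?case by (cases g) auto
next
  case (2 g m n)
  then show ?case by (cases g) auto
next
  case 3 then show ?case by simp
next
  case 4 then show ?case by auto
next
  case 5 then show ?case by auto
next
  case (6 c n l d m)
  from 6(5) obtain z where "(a, z) \<in> den c" "(z, b) \<in> den d" by auto
  then show ?case using "6.IH" by blast
next
  case (7 c n1 m1 d n2 m2)
  from 7(5) obtain a1 a2 b1 b2 where "a = a1 @ a2" "b = b1 @ b2" "(a1, b1) \<in> den c" "(a2, b2) \<in> den d"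
    unfolding den.simps(7) by blast
  then show ?case using "7.IH" by force
qed

section \<open>Graphs\<close>

definition gr :: "nat \<Rightarrow> ('a list \<Rightarrow> 'b list) \<Rightarrow> ('a list \<times> 'b list) set" where
  "gr n f = {(p, f p) | p. length p = n}"

definition tens :: "('a list \<times> 'b list) set \<Rightarrow> ('a list \<times> 'b list) set \<Rightarrow> ('a list \<times> 'b list) set" where
  "tens R S = {(a1 @ a2, b1 @ b2) | a1 a2 b1 b2. (a1, b1) \<in> R \<and> (a2, b2) \<in> S}"

lemma den_Tensor [simp]: "den (Tensor c d) = tens (den c) (den d)"
  by (simp add: tens_def)

declare den.simps(7) [simp del]

lemma gr_cong: "(\<And>p. length p = n \<Longrightarrow> f p = g p) \<Longrightarrow> gr n f = gr n g"
  unfolding gr_def by (intro Collect_cong) auto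

lemma gr_mem: "(a, b) \<in> gr n f \<longleftrightarrow> length a = n \<and> b = f a"
  unfolding gr_def by auto

lemma gr_comp:
  assumes "\<And>p. length p = n \<Longrightarrow> length (f p) = l"
  shows "gr n f O gr l g = gr n (g \<circ> f)"
proof (intro set_eqI iffI)
  fix x assume "x \<in> gr n f O gr l g"
  then obtain a z b where "x = (a, b)" "(a, z) \<in> gr n f" "(z, b) \<in> gr l g" by blast
  then show "x \<in> gr n (g \<circ> f)" by (simp add: gr_mem)
next
  fix x assume "x \<in> gr n (g \<circ> f)"
  then obtain a where a: "x = (a, g (f a))" "length a = n" by (auto simp: gr_def)
  then have "(a, f a) \<in> gr n f" "(f a, g (f a)) \<in> gr l g" using assms by (auto simp: gr_mem)
  then show "x \<in> gr n f O gr l g" using a(1) by blast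
qed

lemma tens_gr:
  "tens (gr n1 f) (gr n2 g) = gr (n1 + n2) (\<lambda>p. f (take n1 p) @ g (drop n1 p))"
proof (intro set_eqI iffI)
  fix x assume "x \<in> tens (gr n1 f) (gr n2 g)"
  then obtain a1 a2 b1 b2 where x: "x = (a1 @ a2, b1 @ b2)" "(a1, b1) \<in> gr n1 f" "(a2, b2) \<in> gr n2 g"
    unfolding tens_def by blast
  then show "x \<in> gr (n1 + n2) (\<lambda>p. f (take n1 p) @ g (drop n1 p))" by (simp add: gr_mem)
next
  fix x assume "x \<in> gr (n1 + n2) (\<lambda>p. f (take n1 p) @ g (drop n1 p))"
  then obtain p where p: "x = (p, f (take n1 p) @ g (drop n1 p))" "length p = n1 + n2" by (auto simp: gr_def)
  have "(take n1 p, f (take n1 p)) \<in> gr n1 f" "(drop n1 p, g (drop n1 p)) \<in> gr n2 g"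
    using p(2) by (auto simp: gr_mem)
  then show "x \<in> tens (gr n1 f) (gr n2 g)" unfolding tens_def p(1)
    by (metis (mono_tags, lifting) CollectI append_take_drop_id)
qed

lemma den_idc: "den (idc n) = gr n (\<lambda>p. p)"
proof (induction n)
  case 0
  then show ?case by (auto simp: gr_def)
next
  case (Suc n)
  have "den (Id1::'a circ) = gr 1 (\<lambda>p. p)"
  proof (intro set_eqI iffI)
    fix x :: "'a kx list \<times> 'a kx list"
    assume "x \<in> den Id1" then show "x \<in> gr 1 (\<lambda>p. p)" by (auto simp: gr_def)
  next
    fix x :: "'a kx list \<times> 'a kx list"
    assume "x \<in> gr 1 (\<lambda>p. p)"
    then obtain p where "x = (p, p)" "length p = 1" by (auto simp: gr_def)
    then obtain q where "p = [q]" by (metis One_nat_def length_0_conv length_Suc_conv)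
    then show "x \<in> den Id1" using \<open>x = (p, p)\<close> by simp
  qed
  then have "den (idc (Suc n)::'a circ) = gr (1 + n) (\<lambda>p. take 1 p @ drop 1 p)"
    using Suc by (simp only: idc.simps den_Tensor tens_gr)
  then show ?case by simp
qed

lemma has_sort_idc: "has_sort (idc n) n n"
proof (induction n)
  case 0 then show ?case by (simp add: has_sort.intros(3))
next
  case (Suc n) then show ?case by (auto intro!: has_sort_TensorI[OF has_sort.intros(4)])
qed

lemma sfg_idc: "sfg (idc n)"
  by (induction n) (auto intro: sfg.intros(2) sfg.intros(6)[OF sfg.intros(3)])

lemma RatK_Fract: "coeff q 0 \<noteq> 0 \<Longrightarrow> Fract p q \<in> RatK"
  unfolding RatK_def by blast

lemma RatK_E:
  assumes "x \<in> RatK"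
  obtains p q where "x = Fract p q" "coeff q 0 \<noteq> 0" "q \<noteq> 0"
  using assms unfolding RatK_def by force

lemma RatK_0: "0 \<in> RatK"
  by (simp add: Zero_fract_def RatK_Fract)

lemma RatK_1: "1 \<in> RatK"
  by (simp add: One_fract_def RatK_Fract)

lemma RatK_add: "x \<in> RatK \<Longrightarrow> y \<in> RatK \<Longrightarrow> x + y \<in> RatK"
  by (elim RatK_E) (simp add: RatK_Fract coeff_mult_0)

lemma RatK_mult: "x \<in> RatK \<Longrightarrow> y \<in> RatK \<Longrightarrow> x * y \<in> RatK"
  by (elim RatK_E) (simp add: RatK_Fract coeff_mult_0)

lemma RatK_const: "const_kx r \<in> RatK"
  by (simp add: const_kx_def RatK_Fract)

lemma RatK_X: "X_kx \<in> RatK"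
  by (simp add: X_kx_def RatK_Fract)

lemma RatK_sum: "(\<And>i. i \<in> I \<Longrightarrow> f i \<in> RatK) \<Longrightarrow> sum f I \<in> RatK"
proof (induction I rule: infinite_finite_induct)
  case (infinite A) then show ?case by (simp add: RatK_0)
next
  case empty then show ?case by (simp add: RatK_0)
next
  case (insert x F) then show ?case by (simp add: RatK_add)
qed

lemma RatK_inv:
  assumes "r \<in> RatK"
  shows "1 - r * X_kx \<noteq> 0 \<and> inverse (1 - r * X_kx) \<in> RatK"
proof -
  obtain p q where r: "r = Fract p q" "coeff q 0 \<noteq> 0" "q \<noteq> 0" using assms by (rule RatK_E)
  define N where "N = q - p * [:0, 1:]"
  have cN: "coeff N 0 = coeff q 0" by (simp add: N_def)
  then have N0: "N \<noteq> 0" using r(2) by auto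
  have eq: "1 - r * X_kx = Fract N q"
    using r(3) by (simp add: r(1) X_kx_def One_fract_def N_def)
  have "Fract N q \<noteq> 0" using N0 r(3) by (simp add: Zero_fract_def eq_fract)
  moreover have "inverse (Fract N q) \<in> RatK" using cN r(2) by (simp add: RatK_Fract)
  ultimately show ?thesis by (simp add: eq)
qed

section \<open>Rational affine forms\<close>

definition raf :: "nat \<Rightarrow> ('k::field kx list \<Rightarrow> 'k kx) \<Rightarrow> bool" where
  "raf n \<phi> \<longleftrightarrow> (\<exists>a b. (\<forall>j<n. a j \<in> RatK) \<and> b \<in> RatK \<and>
      (\<forall>p. length p = n \<longrightarrow> \<phi> p = (\<Sum>j<n. a j * p ! j) + b))"

lemma rafI:
  "(\<And>j. j < n \<Longrightarrow> a j \<in> RatK) \<Longrightarrow> b \<in> RatK \<Longrightarrow>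
   (\<And>p. length p = n \<Longrightarrow> \<phi> p = (\<Sum>j<n. a j * p ! j) + b) \<Longrightarrow> raf n \<phi>"
  unfolding raf_def by blast

lemma raf_cong: "raf n \<phi> \<Longrightarrow> (\<And>p. length p = n \<Longrightarrow> \<phi> p = \<psi> p) \<Longrightarrow> raf n \<psi>"
  unfolding raf_def by metis

lemma raf_const: "c \<in> RatK \<Longrightarrow> raf n (\<lambda>_. c)"
  by (rule rafI[where a = "\<lambda>_. 0" and b = c]) (auto simp: RatK_0)

lemma raf_proj: "k < n \<Longrightarrow> raf n (\<lambda>p. p ! k)"
proof (rule rafI[where a = "\<lambda>j. if j = k then 1 else 0" and b = 0])
  fix p :: "'a kx list" assume "k < n"
  have "(\<Sum>j<n. (if j = k then 1 else 0) * p ! j) = (\<Sum>j<n. if j = k then p ! k else 0)"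
    by (intro sum.cong) auto
  also have "\<dots> = p ! k" using \<open>k < n\<close> by simp
  finally show "p ! k = (\<Sum>j<n. (if j = k then 1 else 0) * p ! j) + 0" by simp
qed (auto simp: RatK_0 RatK_1)

lemma raf_add: "raf n \<phi> \<Longrightarrow> raf n \<psi> \<Longrightarrow> raf n (\<lambda>p. \<phi> p + \<psi> p)"
proof -
  assume "raf n \<phi>" "raf n \<psi>"
  then obtain a b a' b' where h: "\<forall>j<n. a j \<in> RatK" "b \<in> RatK" "\<forall>p. length p = n \<longrightarrow> \<phi> p = (\<Sum>j<n. a j * p ! j) + b"
    "\<forall>j<n. a' j \<in> RatK" "b' \<in> RatK" "\<forall>p. length p = n \<longrightarrow> \<psi> p = (\<Sum>j<n. a' j * p ! j) + b'"
    unfolding raf_def by blast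
  show ?thesis
    by (rule rafI[where a = "\<lambda>j. a j + a' j" and b = "b + b'"])
       (use h in \<open>auto simp: RatK_add sum.distrib distrib_right\<close>)
qed

lemma raf_scale: "c \<in> RatK \<Longrightarrow> raf n \<phi> \<Longrightarrow> raf n (\<lambda>p. c * \<phi> p)"
proof -
  assume c: "c \<in> RatK" and "raf n \<phi>"
  then obtain a b where h: "\<forall>j<n. a j \<in> RatK" "b \<in> RatK" "\<forall>p. length p = n \<longrightarrow> \<phi> p = (\<Sum>j<n. a j * p ! j) + b"
    unfolding raf_def by blast
  show ?thesis
    by (rule rafI[where a = "\<lambda>j. c * a j" and b = "c * b"])
       (use h c in \<open>auto simp: RatK_mult sum_distrib_left distrib_left mult.assoc\<close>)
qed

lemma raf_sum: "(\<And>j. j < (l::nat) \<Longrightarrow> raf n (\<phi> j)) \<Longrightarrow> raf n (\<lambda>p. \<Sum>j<l. \<phi> j p)"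
proof (induction l)
  case 0 then show ?case by (simp add: raf_const RatK_0)
next
  case (Suc l)
  then have "raf n (\<lambda>p. (\<Sum>j<l. \<phi> j p) + \<phi> l p)" by (intro raf_add) auto
  then show ?case by simp
qed

lemma raf_comp:
  assumes "raf l \<phi>" "\<And>p. length p = n \<Longrightarrow> length (h p) = l" "\<And>j. j < l \<Longrightarrow> raf n (\<lambda>p. h p ! j)"
  shows "raf n (\<lambda>p. \<phi> (h p))"
proof -
  obtain a b where ab: "\<forall>j<l. a j \<in> RatK" "b \<in> RatK" "\<forall>q. length q = l \<longrightarrow> \<phi> q = (\<Sum>j<l. a j * q ! j) + b"
    using assms(1) unfolding raf_def by blast
  have "raf n (\<lambda>p. (\<Sum>j<l. a j * h p ! j) + b)"
    using ab assms(3) by (intro raf_add raf_sum raf_scale raf_const) auto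
  then show ?thesis by (rule raf_cong) (simp add: ab(3) assms(2))
qed

section \<open>Feedback semantics\<close>

lemma tens_mem: "(x, y) \<in> tens R S \<longleftrightarrow> (\<exists>a1 a2 b1 b2. x = a1 @ a2 \<and> y = b1 @ b2 \<and> (a1, b1) \<in> R \<and> (a2, b2) \<in> S)"
  unfolding tens_def by blast

lemma den_cup_mem: "(x, y) \<in> den (cup :: 'k::field circ) \<longleftrightarrow> x = [] \<and> (\<exists>p. y = [p, p])"
proof
  assume "(x, y) \<in> den (cup :: 'k::field circ)"
  then obtain z where "(z, x) \<in> gden (GDisc :: 'k gen)" "(z, y) \<in> gden (GCopy :: 'k gen)"
    unfolding cup_def by auto
  then show "x = [] \<and> (\<exists>p. y = [p, p])" by auto
next
  assume "x = [] \<and> (\<exists>p. y = [p, p])"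
  then obtain p where h: "x = []" "y = [p, p]" by blast
  have "([p], x) \<in> gden (GDisc :: 'k gen)" "([p], y) \<in> gden (GCopy :: 'k gen)" using h by auto
  then show "(x, y) \<in> den (cup :: 'k::field circ)" unfolding cup_def by auto
qed

lemma den_cap_mem: "(x, y) \<in> den (cap :: 'k::field circ) \<longleftrightarrow> y = [] \<and> (\<exists>p. x = [p, p])"
proof
  assume "(x, y) \<in> den (cap :: 'k::field circ)"
  then obtain z where "(z, x) \<in> gden (GCopy :: 'k gen)" "(z, y) \<in> gden (GDisc :: 'k gen)"
    unfolding cap_def by auto
  then show "y = [] \<and> (\<exists>p. x = [p, p])" by auto
next
  assume "y = [] \<and> (\<exists>p. x = [p, p])"
  then obtain p where h: "y = []" "x = [p, p]" by blast
  have "([p], x) \<in> gden (GCopy :: 'k gen)" "([p], y) \<in> gden (GDisc :: 'k gen)" using h by auto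
  then show "(x, y) \<in> den (cap :: 'k::field circ)" unfolding cap_def by auto
qed

lemma den_Id1_mem: "(x, y) \<in> den (Id1 :: 'k::field circ) \<longleftrightarrow> (\<exists>p. x = [p] \<and> y = [p])"
  by auto

lemma D1_mem: "(x, y) \<in> den (Tensor (idc n) (cup :: 'k::field circ)) \<longleftrightarrow> length x = n \<and> (\<exists>p. y = x @ [p, p])"
  unfolding den_Tensor tens_mem den_idc gr_mem den_cup_mem by auto

lemma D2_mem: "(x, y) \<in> den (Tensor c (Id1 :: 'k::field circ)) \<longleftrightarrow> (\<exists>x1 y1 q. x = x1 @ [q] \<and> y = y1 @ [q] \<and> (x1, y1) \<in> den c)"
  unfolding den_Tensor tens_mem den_Id1_mem by blast

lemma D3_mem: "(x, y) \<in> den (Tensor (idc m) (Tensor (Gen GReg) (Id1 :: 'k::field circ))) \<longleftrightarrow>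
   (\<exists>b u t. length b = m \<and> x = b @ [u, t] \<and> y = b @ [u * X_kx, t])"
proof
  assume "(x, y) \<in> den (Tensor (idc m) (Tensor (Gen GReg) (Id1 :: 'k::field circ)))"
  then obtain a1 a2 b1 b2 where h: "x = a1 @ a2" "y = b1 @ b2" "(a1, b1) \<in> den (idc m :: 'k circ)"
    "(a2, b2) \<in> den (Tensor (Gen GReg) (Id1 :: 'k::field circ))"
    unfolding den_Tensor[of "idc m"] tens_mem by blast
  from h(4) obtain c1 c2 d1 d2 where h2: "a2 = c1 @ c2" "b2 = d1 @ d2" "(c1, d1) \<in> den (Gen GReg :: 'k circ)"
    "(c2, d2) \<in> den (Id1 :: 'k circ)"
    unfolding den_Tensor tens_mem by blast
  from h2(3) obtain u where u: "c1 = [u]" "d1 = [u * X_kx]" by auto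
  from h2(4) obtain t where t: "c2 = [t]" "d2 = [t]" by auto
  have "length a1 = m" "b1 = a1" using h(3) by (auto simp: den_idc gr_mem)
  then show "\<exists>b u t. length b = m \<and> x = b @ [u, t] \<and> y = b @ [u * X_kx, t]"
    using h(1,2) h2(1,2) u t by auto
next
  assume "\<exists>b u t. length b = m \<and> x = b @ [u, t] \<and> y = b @ [u * X_kx, t]"
  then obtain b u t where h: "length b = m" "x = b @ [u, t]" "y = b @ [u * X_kx, t]" by blast
  have "([u], [u * X_kx]) \<in> den (Gen GReg :: 'k circ)" by simp
  moreover have "([t], [t]) \<in> den (Id1 :: 'k circ)" by simp
  ultimately have "([u] @ [t], [u * X_kx] @ [t]) \<in> den (Tensor (Gen GReg) (Id1 :: 'k circ))"
    unfolding den_Tensor tens_mem by blast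
  moreover have "(b, b) \<in> den (idc m :: 'k circ)" using h(1) by (simp add: den_idc gr_mem)
  ultimately show "(x, y) \<in> den (Tensor (idc m) (Tensor (Gen GReg) (Id1 :: 'k::field circ)))"
    unfolding den_Tensor[of "idc m"] tens_mem h by (metis append_Cons append_Nil)
qed

lemma D4_mem: "(x, y) \<in> den (Tensor (idc m) (cap :: 'k::field circ)) \<longleftrightarrow> length y = m \<and> (\<exists>t. x = y @ [t, t])"
  unfolding den_Tensor tens_mem den_idc gr_mem den_cap_mem by auto

lemma den_Tr:
  fixes c :: "'k::field circ"
  assumes hs: "has_sort c (Suc n) (Suc m)"
  shows "den (Tr n m c) = {(a, b) | a b u. (a @ [u * X_kx], b @ [u]) \<in> den c}"
proof (intro set_eqI iffI)
  fix x assume "x \<in> den (Tr n m c)"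
  then obtain a r z w v where x: "x = (a, r)" and
    1: "(a, z) \<in> den (Tensor (idc n) cup)" and 2: "(z, w) \<in> den (Tensor c Id1)" and
    3: "(w, v) \<in> den (Tensor (idc m) (Tensor (Gen GReg) Id1))" and 4: "(v, r) \<in> den (Tensor (idc m) cap)"
    unfolding Tr_def den.simps(6) by blast
  from 1[unfolded D1_mem] obtain p where z: "length a = n" "z = a @ [p, p]" by blast
  from 2[unfolded D2_mem] obtain x1 y1 q where w: "z = x1 @ [q]" "w = y1 @ [q]" "(x1, y1) \<in> den c" by blast
  have x1: "x1 = a @ [p]" "q = p" using z(2) w(1) by auto
  from 3[unfolded D3_mem] obtain b u t where v: "length b = m" "w = b @ [u, t]" "v = b @ [u * X_kx, t]" by blast
  have "length y1 = Suc m" using den_lengths[OF hs w(3)] by simp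
  then have y1: "y1 = b @ [u]" "t = p" using v(1,2) w(2) x1(2) by auto
  from 4[unfolded D4_mem] obtain t' where r: "length r = m" "v = r @ [t', t']" by blast
  have "r = b" "u * X_kx = p" using r v(1,3) y1(2) by auto
  then show "x \<in> {(a, b) | a b u. (a @ [u * X_kx], b @ [u]) \<in> den c}"
    using w(3) x1(1) y1(1) x by auto
next
  fix x assume "x \<in> {(a, b) | a b u. (a @ [u * X_kx], b @ [u]) \<in> den c}"
  then obtain a b u where x: "x = (a, b)" and d: "(a @ [u * X_kx], b @ [u]) \<in> den c" by blast
  have l: "length a = n" "length b = m" using den_lengths[OF hs d] by auto
  have 1: "(a, a @ [u * X_kx, u * X_kx]) \<in> den (Tensor (idc n) (cup :: 'k circ))" unfolding D1_mem using l by blast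
  have 2: "(a @ [u * X_kx, u * X_kx], b @ [u, u * X_kx]) \<in> den (Tensor c Id1)"
    unfolding D2_mem using d by (intro exI[of _ "a @ [u * X_kx]"] exI[of _ "b @ [u]"]) auto
  have 3: "(b @ [u, u * X_kx], b @ [u * X_kx, u * X_kx]) \<in> den (Tensor (idc m) (Tensor (Gen GReg) (Id1 :: 'k circ)))"
    unfolding D3_mem using l by blast
  have 4: "(b @ [u * X_kx, u * X_kx], b) \<in> den (Tensor (idc m) (cap :: 'k circ))"
    unfolding D4_mem using l by blast
  show "x \<in> den (Tr n m c)" unfolding Tr_def den.simps(6) x using 1 2 3 4 by blast
qed

section \<open>Graphs of rational affine maps\<close>

definition RA :: "nat \<Rightarrow> nat \<Rightarrow> ('k::field kx list \<times> 'k kx list) set \<Rightarrow> bool" where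
  "RA n m R \<longleftrightarrow> (\<exists>f. (\<forall>p. length p = n \<longrightarrow> length (f p) = m) \<and> (\<forall>i<m. raf n (\<lambda>p. f p ! i)) \<and> R = gr n f)"

lemma RA_I:
  "(\<And>p. length p = n \<Longrightarrow> length (f p) = m) \<Longrightarrow> (\<And>i. i < m \<Longrightarrow> raf n (\<lambda>p. f p ! i)) \<Longrightarrow> R = gr n f \<Longrightarrow> RA n m R"
  unfolding RA_def by blast

lemma RA_iff: "RA n m R \<longleftrightarrow> (\<exists>f. rational_affine n m f \<and> R = {(p, f p) | p. length p = n})"
proof
  assume "RA n m R"
  then obtain f where f: "\<forall>p. length p = n \<longrightarrow> length (f p) = m" "\<forall>i<m. raf n (\<lambda>p. f p ! i)" "R = gr n f"
    unfolding RA_def by blast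
  have "\<forall>i<m. \<exists>a b. (\<forall>j<n. a j \<in> RatK) \<and> b \<in> RatK \<and>
      (\<forall>p. length p = n \<longrightarrow> f p ! i = (\<Sum>j<n. a j * p ! j) + b)"
    using f(2) unfolding raf_def by blast
  then obtain A B where AB: "\<forall>i<m. (\<forall>j<n. A i j \<in> RatK) \<and> B i \<in> RatK \<and>
      (\<forall>p. length p = n \<longrightarrow> f p ! i = (\<Sum>j<n. A i j * p ! j) + B i)"
    by metis
  have "rational_affine n m f"
    unfolding rational_affine_def
  proof (intro exI conjI allI impI)
    fix p :: "'a kx list" assume p: "length p = n"
    show "f p = map (\<lambda>i. (\<Sum>j<n. A i j * p ! j) + B i) [0..<m]"
      by (rule nth_equalityI) (use f(1) p AB in auto)
  qed (use AB in auto)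
  then show "\<exists>f. rational_affine n m f \<and> R = {(p, f p) | p. length p = n}"
    using f(3) unfolding gr_def by blast
next
  assume "\<exists>f. rational_affine n m f \<and> R = {(p, f p) | p. length p = n}"
  then obtain f A b where f: "R = gr n f" "\<forall>i<m. \<forall>j<n. A i j \<in> RatK" "\<forall>i<m. b i \<in> RatK"
     "\<forall>p. length p = n \<longrightarrow> f p = map (\<lambda>i. (\<Sum>j<n. A i j * p ! j) + b i) [0..<m]"
    unfolding rational_affine_def gr_def by blast
  show "RA n m R"
  proof (rule RA_I[OF _ _ f(1)])
    fix i assume "i < m"
    then show "raf n (\<lambda>p. f p ! i)"
      by (intro rafI[where a = "A i" and b = "b i"]) (use f in auto)
  qed (use f in auto)
qed

lemma RA_seq: "RA n l R1 \<Longrightarrow> RA l m R2 \<Longrightarrow> RA n m (R1 O R2)"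
proof -
  assume "RA n l R1" "RA l m R2"
  then obtain f g where f: "\<forall>p. length p = n \<longrightarrow> length (f p) = l" "\<forall>i<l. raf n (\<lambda>p. f p ! i)" "R1 = gr n f"
    and g: "\<forall>p. length p = l \<longrightarrow> length (g p) = m" "\<forall>i<m. raf l (\<lambda>p. g p ! i)" "R2 = gr l g"
    unfolding RA_def by blast
  show ?thesis
  proof (rule RA_I[where f = "g \<circ> f"])
    show "R1 O R2 = gr n (g \<circ> f)" using f g by (simp add: gr_comp)
  next
    fix i assume "i < m"
    then show "raf n (\<lambda>p. (g \<circ> f) p ! i)"
      unfolding comp_def using f g by (intro raf_comp[where \<phi> = "\<lambda>q. g q ! i" and h = f and l = l]) auto
  qed (use f g in auto)
qed

lemma RA_tens: "RA n1 m1 R1 \<Longrightarrow> RA n2 m2 R2 \<Longrightarrow> RA (n1 + n2) (m1 + m2) (tens R1 R2)"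
proof -
  assume "RA n1 m1 R1" "RA n2 m2 R2"
  then obtain f g where f: "\<forall>p. length p = n1 \<longrightarrow> length (f p) = m1" "\<forall>i<m1. raf n1 (\<lambda>p. f p ! i)" "R1 = gr n1 f"
    and g: "\<forall>p. length p = n2 \<longrightarrow> length (g p) = m2" "\<forall>i<m2. raf n2 (\<lambda>p. g p ! i)" "R2 = gr n2 g"
    unfolding RA_def by blast
  show ?thesis
  proof (rule RA_I[where f = "\<lambda>p. f (take n1 p) @ g (drop n1 p)"])
    show "tens R1 R2 = gr (n1 + n2) (\<lambda>p. f (take n1 p) @ g (drop n1 p))" using f g by (simp add: tens_gr)
  next
    fix i assume i: "i < m1 + m2"
    show "raf (n1 + n2) (\<lambda>p. (f (take n1 p) @ g (drop n1 p)) ! i)"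
    proof (cases "i < m1")
      case True
      have "raf (n1 + n2) (\<lambda>p. f (take n1 p) ! i)"
      proof (rule raf_comp[where \<phi> = "\<lambda>q. f q ! i" and h = "take n1" and l = n1])
        fix j assume "j < n1"
        then show "raf (n1 + n2) (\<lambda>p. take n1 p ! j)"
          by (intro raf_cong[OF raf_proj[of j]]) auto
      qed (use f True in auto)
      then show ?thesis by (rule raf_cong) (use f True in \<open>simp add: nth_append\<close>)
    next
      case False
      have "raf (n1 + n2) (\<lambda>p. g (drop n1 p) ! (i - m1))"
      proof (rule raf_comp[where \<phi> = "\<lambda>q. g q ! (i - m1)" and h = "drop n1" and l = n2])
        fix j assume "j < n2"
        then show "raf (n1 + n2) (\<lambda>p. drop n1 p ! j)"
          by (intro raf_cong[OF raf_proj[of "n1 + j"]]) auto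
      qed (use g False i in auto)
      then show ?thesis by (rule raf_cong) (use f False in \<open>simp add: nth_append\<close>)
    qed
  qed (use f g in auto)
qed

lemma gr_eqI: "(\<And>a b. (a, b) \<in> R \<longleftrightarrow> length a = n \<and> b = f a) \<Longrightarrow> R = gr n f"
  by (auto simp: gr_mem)

lemma len1: "length a = Suc 0 \<longleftrightarrow> (\<exists>x. a = [x])"
  by (auto simp: length_Suc_conv)

lemma len2: "length a = 2 \<longleftrightarrow> (\<exists>x y. a = [x, y])"
  by (auto simp: length_Suc_conv numeral_2_eq_2)

lemma less2: "(i::nat) < 2 \<longleftrightarrow> i = 0 \<or> i = 1"
  by auto

lemma RA_gen: "gsort g = (n, m) \<Longrightarrow> RA n m (gden g)"
proof -
  have rX: "raf 1 (\<lambda>p. p ! 0 * X_kx)"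
    by (rule raf_cong[OF raf_scale[OF RatK_X raf_proj[of 0 1]]]) (auto simp: mult.commute)
  have rA: "raf 2 (\<lambda>p. p ! 0 + p ! 1)" by (intro raf_add raf_proj) auto
  assume gs: "gsort g = (n, m)"
  show ?thesis
  proof (cases g)
    case GCopy
    then have nm: "n = 1" "m = 2" using gs by auto
    show ?thesis unfolding nm GCopy
    proof (rule RA_I[where f = "\<lambda>p. [p ! 0, p ! 0]"])
      fix i :: nat assume "i < 2"
      then show "raf 1 (\<lambda>p. (\<lambda>p. [p ! 0, p ! 0]) p ! i)" by (auto simp: less2 raf_proj)
    next
      show "gden GCopy = gr 1 (\<lambda>p. [p ! 0, p ! 0])" by (rule gr_eqI) (auto simp: len1)
    qed simp
  next
    case GDisc
    then have nm: "n = 1" "m = 0" using gs by auto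
    show ?thesis unfolding nm GDisc
    proof (rule RA_I[where f = "\<lambda>p. []"])
      fix i :: nat assume "i < 0"
      then show "raf 1 (\<lambda>p. (\<lambda>p. []) p ! i)" by auto
    next
      show "gden GDisc = gr 1 (\<lambda>p. [])" by (rule gr_eqI) (auto simp: len1)
    qed simp
  next
    case (GAmp r)
    then have nm: "n = 1" "m = 1" using gs by auto
    show ?thesis unfolding nm GAmp
    proof (rule RA_I[where f = "\<lambda>p. [const_kx r * p ! 0]"])
      fix i :: nat assume "i < 1"
      then show "raf 1 (\<lambda>p. (\<lambda>p. [const_kx r * p ! 0]) p ! i)" by (auto intro: raf_scale RatK_const raf_proj)
    next
      show "gden (GAmp r) = gr 1 (\<lambda>p. [const_kx r * p ! 0])" by (rule gr_eqI) (auto simp: len1)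
    qed simp
  next
    case GReg
    then have nm: "n = 1" "m = 1" using gs by auto
    show ?thesis unfolding nm GReg
    proof (rule RA_I[where f = "\<lambda>p. [p ! 0 * X_kx]"])
      fix i :: nat assume "i < 1"
      then show "raf 1 (\<lambda>p. (\<lambda>p. [p ! 0 * X_kx]) p ! i)" using rX by auto
    next
      show "gden GReg = gr 1 (\<lambda>p. [p ! 0 * X_kx])" by (rule gr_eqI) (auto simp: len1)
    qed simp
  next
    case GAdd
    then have nm: "n = 2" "m = 1" using gs by auto
    show ?thesis unfolding nm GAdd
    proof (rule RA_I[where f = "\<lambda>p. [p ! 0 + p ! 1]"])
      fix i :: nat assume "i < 1"
      then show "raf 2 (\<lambda>p. (\<lambda>p. [p ! 0 + p ! 1]) p ! i)" using rA by auto
    next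
      show "gden GAdd = gr 2 (\<lambda>p. [p ! 0 + p ! 1])" by (rule gr_eqI) (auto simp: len2)
    qed simp
  next
    case GZero
    then have nm: "n = 0" "m = 1" using gs by auto
    show ?thesis unfolding nm GZero
    proof (rule RA_I[where f = "\<lambda>p. [0]"])
      fix i :: nat assume "i < 1"
      then show "raf 0 (\<lambda>p. (\<lambda>p. [0]) p ! i)" by (auto intro: raf_const RatK_0)
    next
      show "gden GZero = gr 0 (\<lambda>p. [0])" by (rule gr_eqI) (auto simp: len1)
    qed simp
  next
    case GOne
    then have nm: "n = 0" "m = 1" using gs by auto
    show ?thesis unfolding nm GOne
    proof (rule RA_I[where f = "\<lambda>p. [1]"])
      fix i :: nat assume "i < 1"
      then show "raf 0 (\<lambda>p. (\<lambda>p. [1]) p ! i)" by (auto intro: raf_const RatK_1)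
    next
      show "gden GOne = gr 0 (\<lambda>p. [1])" by (rule gr_eqI) (auto simp: len1)
    qed simp
  qed
qed
lemma RA_Id0: "RA 0 0 (den Id0)"
  by (rule RA_I[where f = "\<lambda>p. []"]) (auto intro!: gr_eqI)

lemma RA_Id1: "RA 1 1 (den Id1)"
proof (rule RA_I[where f = "\<lambda>p. [p ! 0]"])
  fix i :: nat assume "i < 1" then show "raf 1 (\<lambda>p. [p ! 0] ! i)" by (auto simp: raf_proj)
next
  show "den Id1 = gr 1 (\<lambda>p. [p ! 0])" by (rule gr_eqI) (auto simp: len1)
qed simp

lemma RA_Sw: "RA 2 2 (den Sw)"
proof (rule RA_I[where f = "\<lambda>p. [p ! 1, p ! 0]"])
  fix i :: nat assume "i < 2" then show "raf 2 (\<lambda>p. [p ! 1, p ! 0] ! i)" by (auto simp: raf_proj less2)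
next
  show "den Sw = gr 2 (\<lambda>p. [p ! 1, p ! 0])" by (rule gr_eqI) (auto simp: len2)
qed simp

lemma RA_Tr:
  fixes c :: "'k::field circ"
  assumes hs: "has_sort c (Suc n) (Suc m)" and ra: "RA (Suc n) (Suc m) (den c)"
  shows "RA n m (den (Tr n m c))"
proof -
  obtain f where f: "\<forall>p. length p = Suc n \<longrightarrow> length (f p) = Suc m" "\<forall>i<Suc m. raf (Suc n) (\<lambda>p. f p ! i)"
    "den c = gr (Suc n) f"
    using ra unfolding RA_def by blast
  obtain \<alpha> \<beta> where ab: "\<forall>j<Suc n. \<alpha> j \<in> RatK" "\<beta> \<in> RatK"
    "\<forall>p. length p = Suc n \<longrightarrow> f p ! m = (\<Sum>j<Suc n. \<alpha> j * p ! j) + \<beta>"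
    using f(2) unfolding raf_def by blast
  define d where "d = 1 - \<alpha> n * X_kx"
  have d: "d \<noteq> 0" "inverse d \<in> RatK" using RatK_inv[of "\<alpha> n"] ab(1) by (auto simp: d_def)
  define S where "S a = (\<Sum>j<n. \<alpha> j * a ! j) + \<beta>" for a :: "'k kx list"
  define G where "G a = inverse d * S a" for a
  define h where "h a = a @ [G a * X_kx]" for a
  define F where "F a = take m (f (h a))" for a
  have key: "f (a @ [u * X_kx]) ! m = S a + \<alpha> n * (u * X_kx)" if "length a = n" for a u
  proof -
    have "f (a @ [u * X_kx]) ! m = (\<Sum>j<Suc n. \<alpha> j * (a @ [u * X_kx]) ! j) + \<beta>"
      using ab(3) that by simp
    also have "\<dots> = (\<Sum>j<n. \<alpha> j * a ! j) + \<alpha> n * (u * X_kx) + \<beta>"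
      using that by (simp add: nth_append)
    finally show ?thesis by (simp add: S_def algebra_simps)
  qed
  have key2: "f (a @ [u * X_kx]) ! m = u \<longleftrightarrow> u = G a" if "length a = n" for a u
  proof -
    have "f (a @ [u * X_kx]) ! m = u \<longleftrightarrow> d * u = S a"
      unfolding key[OF that] d_def by (auto simp: algebra_simps)
    also have "\<dots> \<longleftrightarrow> u = G a" unfolding G_def using d(1) by (auto simp: field_simps)
    finally show ?thesis .
  qed
  have rS: "raf n S" unfolding S_def by (rule rafI[where a = \<alpha> and b = \<beta>]) (use ab in auto)
  have rG: "raf n G" unfolding G_def by (rule raf_scale[OF d(2) rS])
  have rGX: "raf n (\<lambda>a. G a * X_kx)"
    by (rule raf_cong[OF raf_scale[OF RatK_X rG]]) (simp add: mult.commute)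
  have lh: "length (h a) = Suc n" if "length a = n" for a using that by (simp add: h_def)
  have rh: "raf n (\<lambda>a. h a ! j)" if "j < Suc n" for j
  proof (cases "j < n")
    case True
    then show ?thesis by (intro raf_cong[OF raf_proj[of j]]) (auto simp: h_def nth_append)
  next
    case False
    then have "j = n" using that by auto
    then show ?thesis by (intro raf_cong[OF rGX]) (auto simp: h_def nth_append)
  qed
  show ?thesis
  proof (rule RA_I[where f = F])
    fix a :: "'k kx list" assume "length a = n"
    then show "length (F a) = m" using f(1) lh by (simp add: F_def)
  next
    fix i assume i: "i < m"
    have "raf n (\<lambda>a. f (h a) ! i)"
      by (rule raf_comp[where \<phi> = "\<lambda>q. f q ! i" and h = h and l = "Suc n"]) (use f(2) i lh rh in auto)
    then show "raf n (\<lambda>a. F a ! i)" by (rule raf_cong) (simp add: F_def i)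
  next
    show "den (Tr n m c) = gr n F"
    proof (rule gr_eqI)
      fix a b
      show "(a, b) \<in> den (Tr n m c) \<longleftrightarrow> length a = n \<and> b = F a"
      proof
        assume "(a, b) \<in> den (Tr n m c)"
        then obtain u where u: "(a @ [u * X_kx], b @ [u]) \<in> gr (Suc n) f"
          unfolding den_Tr[OF hs] f(3) by blast
        then have la: "length a = n" and fu: "f (a @ [u * X_kx]) = b @ [u]" by (auto simp: gr_mem)
        have lb: "length b = m" using f(1) fu la by (metis length_append_singleton length_append_singleton Suc_inject)
        have "f (a @ [u * X_kx]) ! m = u" using fu lb by (simp add: nth_append)
        then have "u = G a" using key2 la by blast
        then have "F a = b" using fu lb by (simp add: F_def h_def)
        then show "length a = n \<and> b = F a" using la by simp
      next
        assume h1: "length a = n \<and> b = F a"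
        define u where "u = G a"
        have e: "f (a @ [u * X_kx]) ! m = u" using key2 h1 u_def by blast
        have l: "length (f (a @ [u * X_kx])) = Suc m" using f(1) h1 by simp
        have "f (a @ [u * X_kx]) = take m (f (a @ [u * X_kx])) @ [f (a @ [u * X_kx]) ! m]"
          using l by (metis lessI take_Suc_conv_app_nth take_all order_refl)
        also have "\<dots> = b @ [u]" using e h1 by (simp add: F_def h_def u_def)
        finally have "(a @ [u * X_kx], b @ [u]) \<in> gr (Suc n) f" using h1 by (simp add: gr_mem)
        then show "(a, b) \<in> den (Tr n m c)" unfolding den_Tr[OF hs] f(3) by blast
      qed
    qed
  qed
qed

lemma has_sort_Tr:
  fixes c :: "'k circ"
  assumes hc: "has_sort c (Suc n) (Suc m)"
  shows "has_sort (Tr n m c) n m"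
proof -
  have hcup: "has_sort (cup :: 'k circ) 0 2" unfolding cup_def
    by (rule has_sort.intros(6)[where l = 1]) (auto intro: has_sort.intros)
  have hcap: "has_sort (cap :: 'k circ) 2 0" unfolding cap_def
    by (rule has_sort.intros(6)[where l = 1]) (auto intro: has_sort.intros)
  have 1: "has_sort (Tensor (idc n) (cup :: 'k circ)) n (Suc (Suc n))"
    by (rule has_sort_TensorI[OF has_sort_idc[of n] hcup]) simp_all
  have 2: "has_sort (Tensor c Id1) (Suc (Suc n)) (Suc (Suc m))"
    by (rule has_sort_TensorI[OF hc has_sort.intros(4)]) auto
  have 3: "has_sort (Tensor (idc m) (Tensor (Gen GReg) Id1)) (Suc (Suc m)) (Suc (Suc m))"
    by (rule has_sort_TensorI[OF has_sort_idc has_sort_TensorI[OF has_sort.intros(1) has_sort.intros(4)]]) auto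
  have 4: "has_sort (Tensor (idc m) (cap :: 'k circ)) (Suc (Suc m)) m"
    by (rule has_sort_TensorI[OF has_sort_idc[of m] hcap]) simp_all
  show ?thesis unfolding Tr_def
    by (rule has_sort.intros(6)[OF 1 has_sort.intros(6)[OF 2 has_sort.intros(6)[OF 3 4]]])
qed

lemma sfg_RA: "sfg g \<Longrightarrow> has_sort g n m \<Longrightarrow> RA n m (den g)"
proof (induction arbitrary: n m rule: sfg.induct)
  case (1 g)
  then show ?case by (auto elim!: hs_Gen intro: RA_gen)
next
  case 2 then show ?case using RA_Id0 by (auto elim!: hs_Id0)
next
  case 3 then show ?case using RA_Id1 by (auto elim!: hs_Id1)
next
  case 4 then show ?case using RA_Sw by (auto elim!: hs_Sw)
next
  case (5 c d n l m n' m')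
  from 5(7) obtain l' where h: "has_sort c n' l'" "has_sort d l' m'" by (rule hs_Seq)
  show ?case using RA_seq[OF "5.IH"(1)[OF h(1)] "5.IH"(2)[OF h(2)]] by simp
next
  case (6 c d n m)
  from 6(5) obtain a b e h where "n = a + e" "m = b + h" "has_sort c a b" "has_sort d e h" by (rule hs_Tensor)
  then show ?case using "6.IH" by (auto intro: RA_tens)
next
  case (7 c n m n' m')
  have "has_sort (Tr n m c) n m" by (rule has_sort_Tr[OF 7(2)])
  then have "n' = n" "m' = m" using has_sort_unique 7(4) by blast+
  then show ?case using RA_Tr[OF 7(2) "7.IH"[OF 7(2)]] by simp
qed

lemma den_GCopy: "den (Gen GCopy :: 'k::field circ) = gr 1 (\<lambda>p. [hd p, hd p])"
  by (rule gr_eqI) (auto simp: len1)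
lemma den_GDisc: "den (Gen GDisc :: 'k::field circ) = gr 1 (\<lambda>p. [])"
  by (rule gr_eqI) (auto simp: len1)
lemma den_GAmp: "den (Gen (GAmp r) :: 'k::field circ) = gr 1 (\<lambda>p. [const_kx r * hd p])"
  by (rule gr_eqI) (auto simp: len1)
lemma den_GReg: "den (Gen GReg :: 'k::field circ) = gr 1 (\<lambda>p. [hd p * X_kx])"
  by (rule gr_eqI) (auto simp: len1)
lemma den_GAdd: "den (Gen GAdd :: 'k::field circ) = gr 2 (\<lambda>p. [hd p + hd (tl p)])"
  by (rule gr_eqI) (auto simp: len2)
lemma den_GZero: "den (Gen GZero :: 'k::field circ) = gr 0 (\<lambda>p. [0])"
  by (rule gr_eqI) auto
lemma den_GOne: "den (Gen GOne :: 'k::field circ) = gr 0 (\<lambda>p. [1])"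
  by (rule gr_eqI) auto
lemma den_Id0: "den (Id0 :: 'k::field circ) = gr 0 (\<lambda>p. [])"
  by (rule gr_eqI) auto
lemma den_Id1: "den (Id1 :: 'k::field circ) = gr 1 (\<lambda>p. p)"
  by (rule gr_eqI) (auto simp: len1)
lemma den_Sw: "den (Sw :: 'k::field circ) = gr 2 (\<lambda>p. [hd (tl p), hd p])"
  by (rule gr_eqI) (auto simp: len2)

lemmas den_basic = den_GCopy den_GDisc den_GAmp den_GReg den_GAdd den_GZero den_GOne den_Id0 den_Id1 den_Sw

declare den.simps(1) [simp del] den.simps(3-5) [simp del]
declare den_basic [simp] den_idc [simp] gr_mem [simp]

fun disc :: "nat \<Rightarrow> 'k circ" where
  "disc 0 = Id0"
| "disc (Suc n) = Tensor (Gen GDisc) (disc n)"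

lemma disc_props: "sfg (disc n :: 'k::field circ) \<and> has_sort (disc n :: 'k circ) n 0 \<and> den (disc n :: 'k circ) = gr n (\<lambda>p. [])"
proof (induction n)
  case 0 then show ?case by (auto intro: sfg.intros has_sort.intros)
next
  case (Suc n)
  have "sfg (disc (Suc n) :: 'k circ)" using Suc by (auto intro: sfg.intros(1) sfg.intros(6))
  moreover have "has_sort (disc (Suc n) :: 'k circ) (Suc n) 0"
    using Suc by (auto intro!: has_sort_TensorI[OF has_sort.intros(1)[of GDisc 1 0]])
  moreover have "den (disc (Suc n) :: 'k circ) = gr (1 + n) (\<lambda>p. [] @ [])"
    using Suc by (simp only: disc.simps den_Tensor den_GDisc tens_gr)
  ultimately show ?case by simp
qed

fun mv :: "nat \<Rightarrow> 'k circ" where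
  "mv 0 = Id1"
| "mv (Suc n) = Seq (Tensor Sw (idc n)) (Tensor Id1 (mv n))"

lemma mv_props: "sfg (mv n :: 'k::field circ) \<and> has_sort (mv n :: 'k circ) (Suc n) (Suc n) \<and>
   den (mv n :: 'k::field circ) = gr (Suc n) (\<lambda>p. tl p @ [hd p])"
proof (induction n)
  case 0
  have "den (mv 0 :: 'k circ) = gr 1 (\<lambda>p. tl p @ [hd p])"
    unfolding mv.simps den_Id1 by (rule gr_cong) (auto simp: len1)
  then show ?case using has_sort.intros(4) sfg.intros(3) by auto
next
  case (Suc n)
  have hs1: "has_sort (Tensor Sw (idc n) :: 'k circ) (Suc (Suc n)) (Suc (Suc n))"
    by (rule has_sort_TensorI[OF has_sort.intros(5) has_sort_idc[of n]]) simp_all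
  have hs2: "has_sort (Tensor Id1 (mv n) :: 'k circ) (Suc (Suc n)) (Suc (Suc n))"
    by (rule has_sort_TensorI[OF has_sort.intros(4)]) (use Suc in simp_all)
  have sf: "sfg (mv (Suc n) :: 'k circ)"
    unfolding mv.simps
    by (rule sfg.intros(5)[OF _ _ hs1 hs2]) (use Suc in \<open>auto intro: sfg.intros(6) sfg.intros(3) sfg.intros(4) sfg_idc\<close>)
  have hs: "has_sort (mv (Suc n) :: 'k circ) (Suc (Suc n)) (Suc (Suc n))"
    unfolding mv.simps by (rule has_sort.intros(6)[OF hs1 hs2])
  have "den (mv (Suc n) :: 'k circ) =
     gr (2 + n) (\<lambda>p. [hd (tl (take 2 p)), hd (take 2 p)] @ drop 2 p) O
     gr (1 + Suc n) (\<lambda>p. take 1 p @ tl (drop 1 p) @ [hd (drop 1 p)])"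
    using Suc by (simp only: mv.simps den.simps(6) den_Tensor den_Sw den_Id1 den_idc tens_gr)
  also have "\<dots> = gr (2 + n) ((\<lambda>p. take 1 p @ tl (drop 1 p) @ [hd (drop 1 p)]) \<circ>
       (\<lambda>p. [hd (tl (take 2 p)), hd (take 2 p)] @ drop 2 p))"
    by (rule gr_comp) simp
  also have "\<dots> = gr (2 + n) (\<lambda>p. tl p @ [hd p])"
  proof (rule gr_cong)
    fix p :: "'k kx list" assume "length p = 2 + n"
    then obtain x y a where "p = x # y # a" by (metis add_2_eq_Suc length_Suc_conv)
    then show "((\<lambda>p. take 1 p @ tl (drop 1 p) @ [hd (drop 1 p)]) \<circ>
       (\<lambda>p. [hd (tl (take 2 p)), hd (take 2 p)] @ drop 2 p)) p = tl p @ [hd p]" by simp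
  qed
  finally show ?case using sf hs by simp
qed

fun cpy :: "nat \<Rightarrow> 'k circ" where
  "cpy 0 = Id0"
| "cpy (Suc n) = Seq (Tensor (Gen GCopy) (cpy n)) (Tensor Id1 (Tensor (mv n) (idc n)))"

lemma cpy_props: "sfg (cpy n :: 'k::field circ) \<and> has_sort (cpy n :: 'k circ) n (n + n) \<and>
   den (cpy n :: 'k circ) = gr n (\<lambda>p. p @ p)"
proof (induction n)
  case 0
  have "den (cpy 0 :: 'k circ) = gr 0 (\<lambda>p. p @ p)"
    unfolding cpy.simps den_Id0 by (rule gr_cong) auto
  then show ?case using has_sort.intros(3) sfg.intros(2) by auto
next
  case (Suc n)
  have mvp: "sfg (mv n :: 'k circ)" "has_sort (mv n :: 'k circ) (Suc n) (Suc n)"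
    "den (mv n :: 'k circ) = gr (Suc n) (\<lambda>p. tl p @ [hd p])" using mv_props by auto
  have hs1: "has_sort (Tensor (Gen GCopy) (cpy n) :: 'k circ) (Suc n) (Suc (Suc (n + n)))"
    by (rule has_sort_TensorI[OF has_sort.intros(1)[of GCopy 1 2]]) (use Suc in simp_all)
  have hs2: "has_sort (Tensor Id1 (Tensor (mv n) (idc n)) :: 'k circ) (Suc (Suc (n + n))) (Suc n + Suc n)"
    by (rule has_sort_TensorI[OF has_sort.intros(4) has_sort_TensorI[OF mvp(2) has_sort_idc]]) simp_all
  have sf: "sfg (cpy (Suc n) :: 'k circ)"
    unfolding cpy.simps
    by (rule sfg.intros(5)[OF _ _ hs1 hs2]) (use Suc mvp in \<open>auto intro: sfg.intros(6) sfg.intros(1) sfg.intros(3) sfg_idc\<close>)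
  have hs: "has_sort (cpy (Suc n) :: 'k circ) (Suc n) (Suc n + Suc n)"
    unfolding cpy.simps by (rule has_sort.intros(6)[OF hs1 hs2])
  have "den (cpy (Suc n) :: 'k circ) =
     gr (1 + n) (\<lambda>p. [hd (take 1 p), hd (take 1 p)] @ (drop 1 p @ drop 1 p)) O
     gr (1 + (Suc n + n)) (\<lambda>q. take 1 q @ ((tl (take (Suc n) (drop 1 q)) @ [hd (take (Suc n) (drop 1 q))]) @ drop (Suc n) (drop 1 q)))"
    using Suc mvp by (simp only: cpy.simps den.simps(6) den_Tensor den_GCopy den_Id1 den_idc tens_gr)
  also have "\<dots> = gr (1 + n) ((\<lambda>q. take 1 q @ ((tl (take (Suc n) (drop 1 q)) @ [hd (take (Suc n) (drop 1 q))]) @ drop (Suc n) (drop 1 q))) \<circ>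
       (\<lambda>p. [hd (take 1 p), hd (take 1 p)] @ (drop 1 p @ drop 1 p)))"
    by (rule gr_comp) simp
  also have "\<dots> = gr (1 + n) (\<lambda>p. p @ p)"
  proof (rule gr_cong)
    fix p :: "'k kx list" assume "length p = 1 + n"
    then obtain x a where p: "p = x # a" "length a = n" by (metis length_Suc_conv plus_1_eq_Suc)
    then show "((\<lambda>q. take 1 q @ ((tl (take (Suc n) (drop 1 q)) @ [hd (take (Suc n) (drop 1 q))]) @ drop (Suc n) (drop 1 q))) \<circ>
       (\<lambda>p. [hd (take 1 p), hd (take 1 p)] @ (drop 1 p @ drop 1 p))) p = p @ p" by simp
  qed
  finally show ?case using sf hs by simp
qed

lemma Fract_pCons: "Fract (pCons a P) 1 = const_kx a + Fract P 1 * X_kx"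
proof -
  have "pCons a P = [:a:] + P * [:0, 1:]" by simp
  then show ?thesis by (simp add: const_kx_def X_kx_def)
qed

lemma poly_circ: "\<exists>g. sfg g \<and> has_sort g 1 1 \<and> den (g :: 'k::field circ) = gr 1 (\<lambda>p. [Fract P 1 * hd p])"
proof (induction P)
  case 0
  have hs: "has_sort (Seq (Gen GDisc) (Gen GZero) :: 'k circ) 1 1"
    by (rule has_sort.intros(6)[OF has_sort.intros(1) has_sort.intros(1)]) auto
  have sf: "sfg (Seq (Gen GDisc) (Gen GZero) :: 'k circ)"
    by (rule sfg.intros(5)[OF sfg.intros(1) sfg.intros(1)]) (auto intro: has_sort.intros(1))
  have "den (Seq (Gen GDisc) (Gen GZero) :: 'k circ) = gr 1 (\<lambda>p. [0])"
    by (simp add: gr_comp comp_def)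
  also have "\<dots> = gr 1 (\<lambda>p. [Fract 0 1 * hd p])" by (rule gr_cong) (simp add: Zero_fract_def[symmetric])
  finally show ?case using hs sf by blast
next
  case (pCons a P)
  then obtain g where g: "sfg g" "has_sort g 1 1" "den (g :: 'k circ) = gr 1 (\<lambda>p. [Fract P 1 * hd p])" by blast
  define G :: "'k circ" where "G = Seq (Gen GCopy) (Seq (Tensor (Gen (GAmp a)) (Seq g (Gen GReg))) (Gen GAdd))"
  have hA: "has_sort (Seq g (Gen GReg)) 1 1" by (rule has_sort.intros(6)[OF g(2) has_sort.intros(1)]) auto
  have hB: "has_sort (Tensor (Gen (GAmp a)) (Seq g (Gen GReg))) 2 2"
    by (rule has_sort_TensorI[OF has_sort.intros(1) hA]) auto
  have hC: "has_sort (Seq (Tensor (Gen (GAmp a)) (Seq g (Gen GReg))) (Gen GAdd)) 2 1"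
    by (rule has_sort.intros(6)[OF hB has_sort.intros(1)]) auto
  have hs: "has_sort G 1 1" unfolding G_def
    by (rule has_sort.intros(6)[OF has_sort.intros(1) hC]) auto
  have sfA: "sfg (Seq g (Gen GReg))"
    by (rule sfg.intros(5)[OF g(1) sfg.intros(1) g(2)]) (auto intro: has_sort.intros(1))
  have sfC: "sfg (Seq (Tensor (Gen (GAmp a)) (Seq g (Gen GReg))) (Gen GAdd))"
    by (rule sfg.intros(5)[OF sfg.intros(6)[OF sfg.intros(1) sfA] sfg.intros(1) hB]) (auto intro: has_sort.intros(1))
  have sf: "sfg G" unfolding G_def
    by (rule sfg.intros(5)[OF sfg.intros(1) sfC _ hC]) (auto intro: has_sort.intros(1))
  have "den G = gr 1 (\<lambda>p. [const_kx a * hd p + Fract P 1 * hd p * X_kx])"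
    unfolding G_def by (simp add: g(3) tens_gr gr_comp comp_def)
  also have "\<dots> = gr 1 (\<lambda>p. [Fract (pCons a P) 1 * hd p])"
    by (rule gr_cong) (simp add: Fract_pCons algebra_simps)
  finally show ?case using hs sf by blast
qed

lemma scal_circ:
  assumes r: "r \<in> RatK"
  shows "\<exists>g. sfg g \<and> has_sort g 1 1 \<and> den (g :: 'k::field circ) = gr 1 (\<lambda>p. [r * hd p])"
proof -
  obtain P Q where rPQ: "r = Fract P Q" "coeff Q 0 \<noteq> 0" "Q \<noteq> 0" using r by (rule RatK_E)
  define q0 where "q0 = coeff Q 0"
  define P1 where "P1 = smult (inverse q0) P"
  define Q1 where "Q1 = smult (inverse q0) Q"
  have q0: "q0 \<noteq> 0" using rPQ(2) q0_def by simp
  have Q1: "Q1 \<noteq> 0" "coeff Q1 0 = 1" using q0 rPQ(3) by (auto simp: Q1_def q0_def)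
  have rr: "r = Fract P1 Q1" unfolding rPQ(1) using rPQ(3) Q1(1)
    by (simp add: eq_fract P1_def Q1_def)
  obtain c Q2 where cQ2: "Q1 = pCons c Q2" by (cases Q1)
  have "c = 1" using Q1(2) cQ2 by simp
  then have Q1pc: "Q1 = pCons 1 Q2" using cQ2 by simp
  define P' where "P' = Fract P1 (1 :: 'k poly)"
  define Q2' where "Q2' = Fract Q2 (1 :: 'k poly)"
  define Q1' where "Q1' = Fract Q1 (1 :: 'k poly)"
  have Q1eq: "Q1' = 1 + Q2' * X_kx"
    unfolding Q1'_def Q2'_def Q1pc Fract_pCons by (simp add: const_kx_def One_fract_def pCons_one)
  have Q1nz: "Q1' \<noteq> 0" unfolding Q1'_def using Q1(1) by (simp add: Zero_fract_def eq_fract)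
  have rQ: "r * Q1' = P'" unfolding rr Q1'_def P'_def using Q1(1) by (simp add: eq_fract)
  have key: "u = P' * x + Fract (- Q2) 1 * (u * X_kx) \<longleftrightarrow> u = r * x" for u x
  proof -
    have N: "Fract (- Q2) 1 = - Q2'" by (simp add: Q2'_def)
    have id: "u * Q1' - P' * x = u - (P' * x + Fract (- Q2) 1 * (u * X_kx))"
      unfolding N by (simp add: Q1eq algebra_simps)
    have "u = P' * x + Fract (- Q2) 1 * (u * X_kx) \<longleftrightarrow> u * Q1' - P' * x = 0"
      by (simp add: id)
    also have "\<dots> \<longleftrightarrow> u * Q1' = (r * x) * Q1'" by (simp add: rQ[symmetric] algebra_simps)
    also have "\<dots> \<longleftrightarrow> u = r * x" using Q1nz by simp
    finally show ?thesis .
  qed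
  obtain gP where gP: "sfg gP" "has_sort gP 1 1" "den (gP :: 'k circ) = gr 1 (\<lambda>p. [Fract P1 1 * hd p])"
    using poly_circ by blast
  obtain gN where gN: "sfg gN" "has_sort gN 1 1" "den (gN :: 'k circ) = gr 1 (\<lambda>p. [Fract (- Q2) 1 * hd p])"
    using poly_circ by blast
  define c0 :: "'k circ" where "c0 = Seq (Tensor gP gN) (Seq (Gen GAdd) (Gen GCopy))"
  have hT: "has_sort (Tensor gP gN) 2 2" by (rule has_sort_TensorI[OF gP(2) gN(2)]) auto
  have hAC: "has_sort (Seq (Gen GAdd) (Gen GCopy) :: 'k circ) 2 2"
    by (rule has_sort.intros(6)[OF has_sort.intros(1) has_sort.intros(1)]) auto
  have hc0: "has_sort c0 (Suc 1) (Suc 1)" unfolding c0_def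
    using has_sort.intros(6)[OF hT hAC] by (simp add: numeral_2_eq_2)
  have sAC: "sfg (Seq (Gen GAdd) (Gen GCopy) :: 'k circ)"
    by (rule sfg.intros(5)[OF sfg.intros(1) sfg.intros(1)]) (auto intro: has_sort.intros(1))
  have sc0: "sfg c0" unfolding c0_def
    by (rule sfg.intros(5)[OF sfg.intros(6)[OF gP(1) gN(1)] sAC hT hAC])
  define y where "y p = P' * hd p + Fract (- Q2) 1 * hd (tl p)" for p :: "'k kx list"
  have dc0: "den c0 = gr 2 (\<lambda>p. [y p, y p])"
  proof -
    have "den c0 = gr (1 + 1) (\<lambda>p. [Fract P1 1 * hd (take 1 p) + Fract (- Q2) 1 * hd (drop 1 p),
                                 Fract P1 1 * hd (take 1 p) + Fract (- Q2) 1 * hd (drop 1 p)])"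
      unfolding c0_def by (simp add: gP(3) gN(3) tens_gr gr_comp comp_def)
    also have "\<dots> = gr (1 + 1) (\<lambda>p. [y p, y p])"
    proof (rule gr_cong)
      fix p :: "'k kx list" assume "length p = 1 + 1"
      then have "length p = 2" by simp
      then obtain x z where "p = [x, z]" unfolding len2 by blast
      then show "[Fract P1 1 * hd (take 1 p) + Fract (- Q2) 1 * hd (drop 1 p),
                   Fract P1 1 * hd (take 1 p) + Fract (- Q2) 1 * hd (drop 1 p)] = [y p, y p]"
        by (simp add: y_def P'_def)
    qed
    finally show ?thesis by (simp add: numeral_2_eq_2)
  qed
  have hg: "has_sort (Tr 1 1 c0) 1 1" by (rule has_sort_Tr[OF hc0])
  have sg: "sfg (Tr 1 1 c0)" by (rule sfg.intros(7)[OF sc0 hc0])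
  have "den (Tr 1 1 c0) = gr 1 (\<lambda>p. [r * hd p])"
  proof (rule gr_eqI)
    fix a b
    show "(a, b) \<in> den (Tr 1 1 c0) \<longleftrightarrow> length a = 1 \<and> b = [r * hd a]"
    proof
      assume "(a, b) \<in> den (Tr 1 1 c0)"
      then obtain u where u: "(a @ [u * X_kx], b @ [u]) \<in> gr 2 (\<lambda>p. [y p, y p])"
        unfolding den_Tr[OF hc0] dc0 by blast
      then have la: "length a = 1" and e: "[y (a @ [u * X_kx]), y (a @ [u * X_kx])] = b @ [u]" by auto
      obtain x where ax: "a = [x]" using la by (auto simp: len1)
      have "b = [y [x, u * X_kx]]" "u = y [x, u * X_kx]" using e ax by (auto simp: append_eq_Cons_conv)
      then have "u = r * x" "b = [u]" using key[of u x] by (auto simp: y_def)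
      then show "length a = 1 \<and> b = [r * hd a]" using ax by simp
    next
      assume h: "length a = 1 \<and> b = [r * hd a]"
      then obtain x where ax: "a = [x]" by (auto simp: len1)
      define u where "u = r * x"
      have "u = y [x, u * X_kx]" using key[of u x] by (simp add: y_def u_def)
      then have "(a @ [u * X_kx], b @ [u]) \<in> gr 2 (\<lambda>p. [y p, y p])" using h ax u_def by simp
      then show "(a, b) \<in> den (Tr 1 1 c0)" unfolding den_Tr[OF hc0] dc0 by blast
    qed
  qed
  then show ?thesis using hg sg by blast
qed

lemma raf_circ: "raf n \<phi> \<Longrightarrow> \<exists>g. sfg g \<and> has_sort g n 1 \<and> den (g :: 'k::field circ) = gr n (\<lambda>p. [\<phi> p])"
proof (induction n arbitrary: \<phi>)
  case 0
  then obtain a b where ab: "b \<in> RatK" "\<forall>p. length p = 0 \<longrightarrow> \<phi> p = (\<Sum>j<0. a j * p ! j) + b"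
    unfolding raf_def by blast
  obtain gb where gb: "sfg gb" "has_sort gb 1 1" "den (gb :: 'k circ) = gr 1 (\<lambda>p. [b * hd p])"
    using scal_circ[OF ab(1)] by blast
  have hs: "has_sort (Seq (Gen GOne) gb) 0 1" by (rule has_sort.intros(6)[OF has_sort.intros(1) gb(2)]) auto
  have sf: "sfg (Seq (Gen GOne) gb)" by (rule sfg.intros(5)[OF sfg.intros(1) gb(1) _ gb(2)]) (auto intro: has_sort.intros(1))
  have "den (Seq (Gen GOne) gb) = gr 0 (\<lambda>p. [b])" by (simp add: gb(3) gr_comp comp_def)
  also have "\<dots> = gr 0 (\<lambda>p. [\<phi> p])" by (rule gr_cong) (simp add: ab(2))
  finally show ?case using hs sf by blast
next
  case (Suc n)
  then obtain a b where ab: "\<forall>j<Suc n. a j \<in> RatK" "b \<in> RatK"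
    "\<forall>p. length p = Suc n \<longrightarrow> \<phi> p = (\<Sum>j<Suc n. a j * p ! j) + b"
    unfolding raf_def by blast
  define \<psi> where "\<psi> q = (\<Sum>j<n. a (Suc j) * q ! j) + b" for q :: "'k kx list"
  have r\<psi>: "raf n \<psi>" unfolding \<psi>_def by (rule rafI[where a = "\<lambda>j. a (Suc j)" and b = b]) (use ab in auto)
  have pt: "\<phi> (x # q) = a 0 * x + \<psi> q" if "length q = n" for x q
  proof -
    have "(\<Sum>j<Suc n. a j * (x # q) ! j) = a 0 * x + (\<Sum>j<n. a (Suc j) * q ! j)"
      by (simp only: sum.lessThan_Suc_shift) simp
    then show ?thesis using ab(3) that by (simp add: \<psi>_def add.assoc del: sum.lessThan_Suc)
  qed
  obtain g\<psi> where g\<psi>: "sfg g\<psi>" "has_sort g\<psi> n 1" "den (g\<psi> :: 'k circ) = gr n (\<lambda>p. [\<psi> p])"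
    using Suc.IH[OF r\<psi>] by blast
  obtain ga where ga: "sfg ga" "has_sort ga 1 1" "den (ga :: 'k circ) = gr 1 (\<lambda>p. [a 0 * hd p])"
    using scal_circ[of "a 0"] ab(1) by blast
  have hT: "has_sort (Tensor ga g\<psi>) (Suc n) 2" by (rule has_sort_TensorI[OF ga(2) g\<psi>(2)]) auto
  have hs: "has_sort (Seq (Tensor ga g\<psi>) (Gen GAdd)) (Suc n) 1"
    by (rule has_sort.intros(6)[OF hT has_sort.intros(1)]) auto
  have sf: "sfg (Seq (Tensor ga g\<psi>) (Gen GAdd))"
    by (rule sfg.intros(5)[OF sfg.intros(6)[OF ga(1) g\<psi>(1)] sfg.intros(1) hT]) (auto intro: has_sort.intros(1))
  have "den (Seq (Tensor ga g\<psi>) (Gen GAdd)) = gr (Suc n) (\<lambda>p. [\<phi> p])"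
    by (simp add: ga(3) g\<psi>(3) tens_gr gr_comp comp_def, rule gr_cong) (auto simp: length_Suc_conv pt)
  then show ?case using hs sf by blast
qed

lemma RA_circ:
  "(\<forall>p. length p = n \<longrightarrow> length (f p) = m) \<Longrightarrow> (\<forall>i<m. raf n (\<lambda>p. f p ! i)) \<Longrightarrow>
   \<exists>g. sfg g \<and> has_sort g n m \<and> den (g :: 'k::field circ) = gr n f"
proof (induction m arbitrary: f)
  case 0
  have "den (disc n :: 'k circ) = gr n f"
    using disc_props[of n] 0(1) by (auto intro!: gr_cong)
  then show ?case using disc_props[of n] by blast
next
  case (Suc m)
  define f' where "f' p = tl (f p)" for p :: "'k kx list"
  have l': "\<forall>p. length p = n \<longrightarrow> length (f' p) = m" using Suc.prems(1) by (simp add: f'_def)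
  have r': "\<forall>i<m. raf n (\<lambda>p. f' p ! i)"
  proof (intro allI impI)
    fix i assume "i < m"
    then show "raf n (\<lambda>p. f' p ! i)"
      by (intro raf_cong[OF Suc.prems(2)[rule_format, of "Suc i"]]) (use Suc.prems(1) in \<open>auto simp: f'_def nth_tl\<close>)
  qed
  obtain g' where g': "sfg g'" "has_sort g' n m" "den (g' :: 'k circ) = gr n f'"
    using Suc.IH[OF l' r'] by blast
  obtain g\<phi> where g\<phi>: "sfg g\<phi>" "has_sort g\<phi> n 1" "den (g\<phi> :: 'k circ) = gr n (\<lambda>p. [f p ! 0])"
    using raf_circ[OF Suc.prems(2)[rule_format, of 0]] by blast
  have cp: "sfg (cpy n :: 'k circ)" "has_sort (cpy n :: 'k circ) n (n + n)" "den (cpy n :: 'k circ) = gr n (\<lambda>p. p @ p)"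
    using cpy_props by auto
  have hT: "has_sort (Tensor g\<phi> g') (n + n) (Suc m)" by (rule has_sort_TensorI[OF g\<phi>(2) g'(2)]) auto
  have hs: "has_sort (Seq (cpy n) (Tensor g\<phi> g')) n (Suc m)" by (rule has_sort.intros(6)[OF cp(2) hT])
  have sf: "sfg (Seq (cpy n) (Tensor g\<phi> g'))" by (rule sfg.intros(5)[OF cp(1) sfg.intros(6)[OF g\<phi>(1) g'(1)] cp(2) hT])
  have "den (Seq (cpy n) (Tensor g\<phi> g')) = gr n (\<lambda>p. [f (take n (p @ p)) ! 0] @ f' (drop n (p @ p)))"
    by (simp only: den.simps(6) den_Tensor cp(3) g\<phi>(3) g'(3) tens_gr) (subst gr_comp, simp_all add: comp_def)
  also have "\<dots> = gr n f"
  proof (rule gr_cong)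
    fix p :: "'k kx list" assume p: "length p = n"
    then have "length (f p) = Suc m" using Suc.prems(1) by simp
    then show "[f (take n (p @ p)) ! 0] @ f' (drop n (p @ p)) = f p"
      using p by (cases "f p") (auto simp: f'_def)
  qed
  finally show ?case using hs sf by blast
qed

theorem proposition11:
  fixes c :: "'k::field circ" and n m :: nat
  assumes "has_sort c n m"
  shows "(\<exists>f. rational_affine n m f \<and> den c = {(p, f p) | p. length p = n})
     \<longleftrightarrow> (\<exists>g. sfg g \<and> has_sort g n m \<and> den g = den c)"
proof
  assume "\<exists>f. rational_affine n m f \<and> den c = {(p, f p) | p. length p = n}"
  then have "RA n m (den c)" by (simp add: RA_iff)
  then obtain f where f: "\<forall>p. length p = n \<longrightarrow> length (f p) = m" "\<forall>i<m. raf n (\<lambda>p. f p ! i)" "den c = gr n f"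
    unfolding RA_def by blast
  then show "\<exists>g. sfg g \<and> has_sort g n m \<and> den g = den c" using RA_circ[OF f(1,2)] by metis
next
  assume "\<exists>g. sfg g \<and> has_sort g n m \<and> den g = den c"
  then obtain g where "sfg g" "has_sort g n m" "den g = den c" by blast
  then have "RA n m (den c)" using sfg_RA by metis
  then show "\<exists>f. rational_affine n m f \<and> den c = {(p, f p) | p. length p = n}" by (simp add: RA_iff)
qed

end
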